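(* If $\Phi$ is a depth-bounded fuzzy bisimulation between fuzzy automata $\mathcal{A}$ and $\mathcal{A}'$, then $\|\Phi\|^b_{\mathcal{A},\mathcal{A}'}\le E(\mathbf{L}(\mathcal{A}),\mathbf{L}(\mathcal{A}'))$.
   Context: $\mathcal{L}=\langle L,\le,\otimes,\Rightarrow,0,1\rangle$ is a complete residuated lattice: $\langle L,\le,0,1\rangle$ is a complete lattice with least element $0$ and greatest element $1$, $\langle L,\otimes,1\rangle$ is a commutative monoid, and $x\otimes y\le z$ iff $x\le (y\Rightarrow z)$; $x\Leftrightarrow y=(x\Rightarrow y)\wedge(y\Rightarrow x)$. Fuzzy sets/relations are maps into $L$ ordered pointwise; $\varphi^{-1}(b,a)=\varphi(a,b)$; $(\varphi\circ\psi)(a,c)=\bigvee_b\varphi(a,b)\otimes\psi(b,c)$, $(f\circ\varphi)(b)=\bigvee_a f(a)\otimes\varphi(a,b)$, $(\varphi\circ g)(a)=\bigvee_b\varphi(a,b)\otimes g(b)$; $S(g,f)=\bigwedge_a(g(a)\Rightarrow f(a))$, $E(g,f)=\bigwedge_a(g(a)\Leftrightarrow f(a))$. A fuzzy automaton over $\Sigma$ is $\mathcal{A}=\langle A,\delta^{\mathcal{A}},\sigma^{\mathcal{A}},\tau^{\mathcal{A}}\rangle$ with $A$ nonempty, $\delta^{\mathcal{A}}:A\times\Sigma\times A\to L$, $\sigma^{\mathcal{A}},\tau^{\mathcal{A}}:A\to L$; $\delta^{\mathcal{A}}_s(x,y)=\delta^{\mathcal{A}}(x,s,y)$; similarly $\mathcal{A}'$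 with states $A'$. $\mathbf{L}(\mathcal{A})(s_1\cdots s_k)=\sigma^{\mathcal{A}}\circ\delta^{\mathcal{A}}_{s_1}\circ\cdots\circ\delta^{\mathcal{A}}_{s_k}\circ\tau^{\mathcal{A}}$. $\|\varphi\|_{\mathcal{A},\mathcal{A}'}=S(\sigma^{\mathcal{A}},\sigma^{\mathcal{A}'}\circ\varphi^{-1})$. A depth-bounded fuzzy bisimulation between $\mathcal{A}$ and $\mathcal{A}'$ is a sequence $\Phi=(\varphi_n)_{n\in\mathbb{N}}$ of fuzzy relations $A\times A'\to L$ with $\varphi_n\le\varphi_{n-1}$ ($n\ge1$), $\varphi_0^{-1}\circ\tau^{\mathcal{A}}\le\tau^{\mathcal{A}'}$, $\varphi_0\circ\tau^{\mathcal{A}'}\le\tau^{\mathcal{A}}$, and for all $s\in\Sigma,n\ge1$: $\varphi_n^{-1}\circ\delta^{\mathcal{A}}_s\le\delta^{\mathcal{A}'}_s\circ\varphi_{n-1}^{-1}$ and $\varphi_n\circ\delta^{\mathcal{A}'}_s\le\delta^{\mathcal{A}}_s\circ\varphi_{n-1}$. Its norm is $\|\Phi\|^b_{\mathcal{A},\mathcal{A}'}=\bigwedge_n\|\varphi_n\|_{\mathcal{A},\mathcal{A}'}\wedge\bigwedge_n\|\varphi_n^{-1}\|_{\mathcal{A}',\mathcal{A}}$. *)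

theory Defs
  imports Main
begin

text \<open>Complete residuated lattice: the carrier is a type of class complete_lattice
  (0 = bot, 1 = top); the monoid operation tn and the residuum rs are parameters.\<close>

definition complete_residuated_lattice ::
  "('l::complete_lattice \<Rightarrow> 'l \<Rightarrow> 'l) \<Rightarrow> ('l \<Rightarrow> 'l \<Rightarrow> 'l) \<Rightarrow> bool" where
  "complete_residuated_lattice tn rs \<longleftrightarrow>
     (\<forall>x y z. tn (tn x y) z = tn x (tn y z)) \<and>
     (\<forall>x y. tn x y = tn y x) \<and>
     (\<forall>x. tn x top = x) \<and>
     (\<forall>x y z. tn x y \<le> z \<longleftrightarrow> x \<le> rs y z)"

definition biimp :: "('l::complete_lattice \<Rightarrow> 'l \<Rightarrow> 'l) \<Rightarrow> 'l \<Rightarrow> 'l \<Rightarrow> 'l" where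
  "biimp rs x y = inf (rs x y) (rs y x)"

definition fconv :: "('a \<Rightarrow> 'b \<Rightarrow> 'l) \<Rightarrow> 'b \<Rightarrow> 'a \<Rightarrow> 'l" where
  "fconv \<phi> = (\<lambda>b a. \<phi> a b)"

definition rcomp :: "('l::complete_lattice \<Rightarrow> 'l \<Rightarrow> 'l) \<Rightarrow>
    ('a \<Rightarrow> 'b \<Rightarrow> 'l) \<Rightarrow> ('b \<Rightarrow> 'c \<Rightarrow> 'l) \<Rightarrow> 'a \<Rightarrow> 'c \<Rightarrow> 'l" where
  "rcomp tn \<phi> \<psi> = (\<lambda>a c. SUP b. tn (\<phi> a b) (\<psi> b c))"

definition setrel :: "('l::complete_lattice \<Rightarrow> 'l \<Rightarrow> 'l) \<Rightarrow>
    ('a \<Rightarrow> 'l) \<Rightarrow> ('a \<Rightarrow> 'b \<Rightarrow> 'l) \<Rightarrow> 'b \<Rightarrow> 'l" where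
  "setrel tn f \<phi> = (\<lambda>b. SUP a. tn (f a) (\<phi> a b))"

definition relset :: "('l::complete_lattice \<Rightarrow> 'l \<Rightarrow> 'l) \<Rightarrow>
    ('a \<Rightarrow> 'b \<Rightarrow> 'l) \<Rightarrow> ('b \<Rightarrow> 'l) \<Rightarrow> 'a \<Rightarrow> 'l" where
  "relset tn \<phi> g = (\<lambda>a. SUP b. tn (\<phi> a b) (g b))"

definition fsubs :: "('l::complete_lattice \<Rightarrow> 'l \<Rightarrow> 'l) \<Rightarrow> ('a \<Rightarrow> 'l) \<Rightarrow> ('a \<Rightarrow> 'l) \<Rightarrow> 'l" where
  "fsubs rs g f = (INF a. rs (g a) (f a))"

definition fequ :: "('l::complete_lattice \<Rightarrow> 'l \<Rightarrow> 'l) \<Rightarrow> ('a \<Rightarrow> 'l) \<Rightarrow> ('a \<Rightarrow> 'l) \<Rightarrow> 'l" where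
  "fequ rs g f = (INF a. biimp rs (g a) (f a))"

record ('a, 's, 'l) fauto =
  delta :: "'a \<Rightarrow> 's \<Rightarrow> 'a \<Rightarrow> 'l"
  sigma :: "'a \<Rightarrow> 'l"
  tau :: "'a \<Rightarrow> 'l"

definition dlt :: "('a, 's, 'l) fauto \<Rightarrow> 's \<Rightarrow> 'a \<Rightarrow> 'a \<Rightarrow> 'l" where
  "dlt A s = (\<lambda>x y. delta A x s y)"

fun wtau :: "('l::complete_lattice \<Rightarrow> 'l \<Rightarrow> 'l) \<Rightarrow> ('a, 's, 'l) fauto \<Rightarrow> 's list \<Rightarrow> 'a \<Rightarrow> 'l" where
  "wtau tn A [] = tau A"
| "wtau tn A (s # w) = relset tn (dlt A s) (wtau tn A w)"

definition lang :: "('l::complete_lattice \<Rightarrow> 'l \<Rightarrow> 'l) \<Rightarrow> ('a, 's, 'l) fauto \<Rightarrow> 's list \<Rightarrow> 'l" where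
  "lang tn A w = (SUP a. tn (sigma A a) (wtau tn A w a))"

definition fnorm :: "('l::complete_lattice \<Rightarrow> 'l \<Rightarrow> 'l) \<Rightarrow> ('l \<Rightarrow> 'l \<Rightarrow> 'l) \<Rightarrow>
    ('a, 's, 'l) fauto \<Rightarrow> ('b, 's, 'l) fauto \<Rightarrow> ('a \<Rightarrow> 'b \<Rightarrow> 'l) \<Rightarrow> 'l" where
  "fnorm tn rs A A' \<phi> = fsubs rs (sigma A) (setrel tn (sigma A') (fconv \<phi>))"

definition db_bisim :: "('l::complete_lattice \<Rightarrow> 'l \<Rightarrow> 'l) \<Rightarrow>
    ('a, 's, 'l) fauto \<Rightarrow> ('b, 's, 'l) fauto \<Rightarrow> (nat \<Rightarrow> 'a \<Rightarrow> 'b \<Rightarrow> 'l) \<Rightarrow> bool" where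
  "db_bisim tn A A' \<Phi> \<longleftrightarrow>
     (\<forall>n\<ge>1. \<Phi> n \<le> \<Phi> (n - 1)) \<and>
     relset tn (fconv (\<Phi> 0)) (tau A) \<le> tau A' \<and>
     relset tn (\<Phi> 0) (tau A') \<le> tau A \<and>
     (\<forall>s. \<forall>n\<ge>1. rcomp tn (fconv (\<Phi> n)) (dlt A s) \<le> rcomp tn (dlt A' s) (fconv (\<Phi> (n - 1)))) \<and>
     (\<forall>s. \<forall>n\<ge>1. rcomp tn (\<Phi> n) (dlt A' s) \<le> rcomp tn (dlt A s) (\<Phi> (n - 1)))"

definition db_norm :: "('l::complete_lattice \<Rightarrow> 'l \<Rightarrow> 'l) \<Rightarrow> ('l \<Rightarrow> 'l \<Rightarrow> 'l) \<Rightarrow>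
    ('a, 's, 'l) fauto \<Rightarrow> ('b, 's, 'l) fauto \<Rightarrow> (nat \<Rightarrow> 'a \<Rightarrow> 'b \<Rightarrow> 'l) \<Rightarrow> 'l" where
  "db_norm tn rs A A' \<Phi> =
     inf (INF n. fnorm tn rs A A' (\<Phi> n)) (INF n. fnorm tn rs A' A (fconv (\<Phi> n)))"

end

theory Submission
  imports Defs
begin

lemma crl_adj: "complete_residuated_lattice tn rs \<Longrightarrow> tn x y \<le> z \<longleftrightarrow> x \<le> rs y z"
  unfolding complete_residuated_lattice_def by blast
lemma crl_assoc: "complete_residuated_lattice tn rs \<Longrightarrow> tn (tn x y) z = tn x (tn y z)"
  unfolding complete_residuated_lattice_def by blast
lemma crl_comm: "complete_residuated_lattice tn rs \<Longrightarrow> tn x y = tn y x"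
  unfolding complete_residuated_lattice_def by blast

lemma tn_mono_l: assumes c: "complete_residuated_lattice tn rs" and "x \<le> y"
  shows "tn x z \<le> tn y z"
proof -
  have "y \<le> rs z (tn y z)" using crl_adj[OF c] by blast
  then show ?thesis using assms(2) crl_adj[OF c] order_trans by metis
qed

lemma tn_mono: assumes c: "complete_residuated_lattice tn rs" and "x \<le> y" "z \<le> w"
  shows "tn x z \<le> tn y w"
proof -
  have "tn x z \<le> tn y z" using tn_mono_l[OF c assms(2)] .
  also have "tn y z = tn z y" using crl_comm[OF c] .
  also have "\<dots> \<le> tn w y" using tn_mono_l[OF c assms(3)] .
  also have "\<dots> = tn y w" using crl_comm[OF c] .
  finally show ?thesis .
qed

lemma tn_SUP_l: assumes c: "complete_residuated_lattice tn rs"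
  and "\<And>i. tn (f i) z \<le> w" shows "tn (SUP i. f i) z \<le> w"
  using assms by (simp add: crl_adj[OF c] SUP_least)

lemma tn_SUP_r: assumes c: "complete_residuated_lattice tn rs"
  and "\<And>i. tn z (f i) \<le> w" shows "tn z (SUP i. f i) \<le> w"
proof -
  have "tn (SUP i. f i) z \<le> w" using tn_SUP_l[OF c] assms(2) crl_comm[OF c] by metis
  then show ?thesis using crl_comm[OF c] by metis
qed

lemma Phi_le0: assumes "db_bisim tn A A' \<Phi>" shows "\<Phi> n \<le> \<Phi> 0"
proof (induction n)
  case 0 then show ?case by simp
next
  case (Suc n)
  have "\<Phi> (Suc n) \<le> \<Phi> n" using assms unfolding db_bisim_def
    by (metis diff_Suc_1 le_add1 plus_1_eq_Suc)
  then show ?case using Suc order_trans by blast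
qed

lemma key:
  assumes c: "complete_residuated_lattice tn rs" and b: "db_bisim tn A A' \<Phi>"
  shows "length w \<le> n \<Longrightarrow> tn (\<Phi> n a b) (wtau tn A w a) \<le> wtau tn A' w b"
proof (induction w arbitrary: n a b)
  case Nil
  have "tn (\<Phi> n a b) (tau A a) \<le> tn (\<Phi> 0 a b) (tau A a)"
    using tn_mono_l[OF c] Phi_le0[OF b, of n] by (simp add: le_fun_def)
  also have "\<dots> \<le> relset tn (fconv (\<Phi> 0)) (tau A) b"
    unfolding relset_def fconv_def by (rule SUP_upper2[where i=a]) auto
  also have "\<dots> \<le> tau A' b" using b unfolding db_bisim_def le_fun_def by blast
  finally show ?case by simp
next
  case (Cons s w)
  then have n1: "n \<ge> 1" and IH: "\<And>a b. tn (\<Phi> (n-1) a b) (wtau tn A w a) \<le> wtau tn A' w b"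
    by auto
  have step: "rcomp tn (fconv (\<Phi> n)) (dlt A s) \<le> rcomp tn (dlt A' s) (fconv (\<Phi> (n - 1)))"
    using b n1 unfolding db_bisim_def by blast
  show ?case
    unfolding wtau.simps relset_def
  proof (rule tn_SUP_r[OF c])
    fix ci
    have h1: "tn (\<Phi> n a b) (dlt A s a ci) \<le> (SUP d. tn (dlt A' s b d) (\<Phi> (n-1) ci d))"
    proof -
      have "tn (\<Phi> n a b) (dlt A s a ci) \<le> rcomp tn (fconv (\<Phi> n)) (dlt A s) b ci"
        unfolding rcomp_def fconv_def by (rule SUP_upper2[where i=a]) auto
      also have "\<dots> \<le> rcomp tn (dlt A' s) (fconv (\<Phi> (n - 1))) b ci"
        using step by (simp add: le_fun_def)
      finally show ?thesis by (simp add: rcomp_def fconv_def)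
    qed
    have "tn (\<Phi> n a b) (tn (dlt A s a ci) (wtau tn A w ci))
        = tn (tn (\<Phi> n a b) (dlt A s a ci)) (wtau tn A w ci)" using crl_assoc[OF c] by metis
    also have "\<dots> \<le> tn (SUP d. tn (dlt A' s b d) (\<Phi> (n-1) ci d)) (wtau tn A w ci)"
      using tn_mono_l[OF c h1] .
    also have "\<dots> \<le> (SUP d. tn (dlt A' s b d) (wtau tn A' w d))"
    proof (rule tn_SUP_l[OF c])
      fix d
      have "tn (tn (dlt A' s b d) (\<Phi> (n-1) ci d)) (wtau tn A w ci)
          = tn (dlt A' s b d) (tn (\<Phi> (n-1) ci d) (wtau tn A w ci))" using crl_assoc[OF c] by metis
      also have "\<dots> \<le> tn (dlt A' s b d) (wtau tn A' w d)"
        using tn_mono[OF c order_refl IH] .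
      also have "\<dots> \<le> (SUP d. tn (dlt A' s b d) (wtau tn A' w d))" by (rule SUP_upper) simp
      finally show "tn (tn (dlt A' s b d) (\<Phi> (n-1) ci d)) (wtau tn A w ci)
          \<le> (SUP d. tn (dlt A' s b d) (wtau tn A' w d))" .
    qed
    finally show "tn (\<Phi> n a b) (tn (dlt A s a ci) (wtau tn A w ci))
        \<le> (SUP d. tn (dlt A' s b d) (wtau tn A' w d))" .
  qed
qed

lemma half:
  assumes c: "complete_residuated_lattice tn rs" and b: "db_bisim tn A A' \<Phi>"
  shows "(INF n. fnorm tn rs A A' (\<Phi> n)) \<le> rs (lang tn A w) (lang tn A' w)"
proof -
  let ?N = "(INF n. fnorm tn rs A A' (\<Phi> n))"
  let ?n = "length w"
  have "tn ?N (lang tn A w) \<le> lang tn A' w"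
    unfolding lang_def
  proof (rule tn_SUP_r[OF c])
    fix a
    have "?N \<le> fnorm tn rs A A' (\<Phi> ?n)" by (rule INF_lower) simp
    also have "\<dots> \<le> rs (sigma A a) (SUP b. tn (sigma A' b) (\<Phi> ?n a b))"
      unfolding fnorm_def fsubs_def setrel_def fconv_def by (rule INF_lower) simp
    finally have h: "tn ?N (sigma A a) \<le> (SUP b. tn (sigma A' b) (\<Phi> ?n a b))"
      using crl_adj[OF c] by blast
    have "tn ?N (tn (sigma A a) (wtau tn A w a)) = tn (tn ?N (sigma A a)) (wtau tn A w a)"
      using crl_assoc[OF c] by metis
    also have "\<dots> \<le> tn (SUP b. tn (sigma A' b) (\<Phi> ?n a b)) (wtau tn A w a)"
      using tn_mono_l[OF c h] .
    also have "\<dots> \<le> (SUP b. tn (sigma A' b) (wtau tn A' w b))"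
    proof (rule tn_SUP_l[OF c])
      fix b
      have "tn (tn (sigma A' b) (\<Phi> ?n a b)) (wtau tn A w a)
          = tn (sigma A' b) (tn (\<Phi> ?n a b) (wtau tn A w a))" using crl_assoc[OF c] by metis
      also have "\<dots> \<le> tn (sigma A' b) (wtau tn A' w b)"
        using tn_mono[OF c order_refl key[OF c b order_refl]] .
      also have "\<dots> \<le> (SUP b. tn (sigma A' b) (wtau tn A' w b))" by (rule SUP_upper) simp
      finally show "tn (tn (sigma A' b) (\<Phi> ?n a b)) (wtau tn A w a)
          \<le> (SUP b. tn (sigma A' b) (wtau tn A' w b))" .
    qed
    finally show "tn ?N (tn (sigma A a) (wtau tn A w a)) \<le> (SUP b. tn (sigma A' b) (wtau tn A' w b))" .
  qed
  then show ?thesis using crl_adj[OF c] by blast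
qed

lemma fconv_fconv[simp]: "fconv (fconv \<phi>) = \<phi>"
  by (simp add: fconv_def)

lemma bisim_sym: assumes "db_bisim tn A A' \<Phi>"
  shows "db_bisim tn A' A (\<lambda>n. fconv (\<Phi> n))"
proof -
  have m: "\<And>n. n \<ge> 1 \<Longrightarrow> fconv (\<Phi> n) \<le> fconv (\<Phi> (n-1))"
    using assms unfolding db_bisim_def by (simp add: le_fun_def fconv_def)
  show ?thesis using assms m unfolding db_bisim_def by simp
qed

theorem mainTheorem15:
  fixes tn rs :: "'l::complete_lattice \<Rightarrow> 'l \<Rightarrow> 'l"
    and A :: "('a, 's, 'l) fauto" and A' :: "('b, 's, 'l) fauto"
    and \<Phi> :: "nat \<Rightarrow> 'a \<Rightarrow> 'b \<Rightarrow> 'l"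
  assumes "complete_residuated_lattice tn rs"
    and "db_bisim tn A A' \<Phi>"
  shows "db_norm tn rs A A' \<Phi> \<le> fequ rs (lang tn A) (lang tn A')"
  unfolding db_norm_def fequ_def biimp_def
proof (rule INF_greatest, rule inf_greatest)
  fix w
  show "inf (INF n. fnorm tn rs A A' (\<Phi> n)) (INF n. fnorm tn rs A' A (fconv (\<Phi> n)))
      \<le> rs (lang tn A w) (lang tn A' w)"
    using half[OF assms, of w] le_infI1 by blast
  show "inf (INF n. fnorm tn rs A A' (\<Phi> n)) (INF n. fnorm tn rs A' A (fconv (\<Phi> n)))
      \<le> rs (lang tn A' w) (lang tn A w)"
    using half[OF assms(1) bisim_sym[OF assms(2)], of w] le_infI2 by blast
qed

end
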